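(* Fix $c>0$, $\lambda>1$, one of the six models, $N$, and $1\le N_1,N_2\le N-1$ with $N_1+N_2=N$. For every $r=1,\dots,\lfloor cN\rfloor$, $$\mathbb{E}\big[\log Z(\mathbb{G}(N,\lfloor cN\rfloor,r))\big]\ge\mathbb{E}\big[\log Z(\mathbb{G}(N,\lfloor cN\rfloor,r-1))\big].$$
   Context: Let $K\ge2$, $\chi=\{0,\dots,q-1\}$, $[N_1]=\{1,\dots,N_1\}$, $[N_2]=\{N_1+1,\dots,N\}$. For $0\le r\le\lfloor cN\rfloor$, $\mathbb{G}(N,\lfloor cN\rfloor,r)$ is the random hypergraph on $[N]$ with $\lfloor cN\rfloor$ independently generated directed $K$-hyperedges: the first $r$ uniform on $[N]^K$, each remaining one uniform on $[N_1]^K$ with probability $N_1/N$ and uniform on $[N_2]^K$ with probability $N_2/N$; potentials are assigned as in the model. $H(x)=\sum_iH_i(x_i)+\sum_{e\in E}H_e(x_e)$ and $Z(G)=\sum_{x\in\chi^N}\lambda^{H(x)}$, $\lambda^{-\infty}=0$. Models: Independent set ($K=2,q=2$, $H_i(1)=1,H_i(0)=0$, $H_e(1,1)=-\infty$, else $0$); MAX-CUT ($K=2,q=2$, $H_i\equiv0$, $H_e(x,y)=\mathbf 1[x\ne y]$); anti-ferromagnetic Ising ($K=2,q=2$, fixed $\beta>0,B\in\mathbb{R}$, $H_i(0)=-B,H_i(1)=B$, $H_e(x,y)=-\beta$ if $x=y$, $\beta$ otherwise); $q$-Coloring ($K=2$, $H_i\equiv0$, $H_e(x,y)=\mathbf 1[x\ne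 y]$); K-SAT ($q=2$, $H_i\equiv0$, independent uniform $a_e\in\{0,1\}^K$, $H_e(a_e)=0$, $1$ otherwise); NAE-K-SAT ($H_e(a_e)=H_e(\mathbf1-a_e)=0$, $1$ otherwise). *)

theory Defs
  imports "HOL-Probability.Probability"
begin

text \<open>A directed K-hyperedge is a list of K vertices in [N] together with its
  (possibly random) edge potential H_e, a function of the list of spins x_e.
  A hypergraph is a list of such hyperedges (multiset of independently generated edges).\<close>

type_synonym hedge = "nat list \<times> (nat list \<Rightarrow> ereal)"

definition lam_pow :: "real \<Rightarrow> ereal \<Rightarrow> real" where
  "lam_pow lam h = (if h = -\<infinity> then 0 else lam powr real_of_ereal h)"

datatype model =
    IndSet
  | MaxCut
  | Ising real real       \<comment> \<open>Ising beta B\<close>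
  | Coloring nat
  | KSAT nat
  | NAEKSAT nat

fun mK :: "model \<Rightarrow> nat" where
  "mK (KSAT K) = K"
| "mK (NAEKSAT K) = K"
| "mK _ = 2"

fun mq :: "model \<Rightarrow> nat" where
  "mq (Coloring q) = q"
| "mq _ = 2"

fun valid_model :: "model \<Rightarrow> bool" where
  "valid_model (Ising \<beta> B) = (\<beta> > 0)"
| "valid_model (KSAT K) = (K \<ge> 2)"
| "valid_model (NAEKSAT K) = (K \<ge> 2)"
| "valid_model _ = True"

fun node_pot :: "model \<Rightarrow> nat \<Rightarrow> ereal" where
  "node_pot IndSet s = (if s = 1 then 1 else 0)"
| "node_pot (Ising \<beta> B) s = (if s = 0 then ereal (-B) else ereal B)"
| "node_pot _ s = 0"

definition bin_lists :: "nat \<Rightarrow> nat list set" where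
  "bin_lists K = {a. length a = K \<and> set a \<subseteq> {0,1}}"

fun edge_pot :: "model \<Rightarrow> (nat list \<Rightarrow> ereal) pmf" where
  "edge_pot IndSet = return_pmf (\<lambda>y. if y = [1,1] then -\<infinity> else 0)"
| "edge_pot MaxCut = return_pmf (\<lambda>y. if y ! 0 \<noteq> y ! 1 then 1 else 0)"
| "edge_pot (Ising \<beta> B) = return_pmf (\<lambda>y. if y ! 0 = y ! 1 then ereal (-\<beta>) else ereal \<beta>)"
| "edge_pot (Coloring q) = return_pmf (\<lambda>y. if y ! 0 \<noteq> y ! 1 then 1 else 0)"
| "edge_pot (KSAT K) = map_pmf (\<lambda>a y. if y = a then 0 else 1) (pmf_of_set (bin_lists K))"
| "edge_pot (NAEKSAT K) =
     map_pmf (\<lambda>a y. if y = a \<or> y = map (\<lambda>b. 1 - b) a then 0 else 1) (pmf_of_set (bin_lists K))"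

definition hamiltonian :: "model \<Rightarrow> nat \<Rightarrow> hedge list \<Rightarrow> (nat \<Rightarrow> nat) \<Rightarrow> ereal" where
  "hamiltonian M N G x =
     (\<Sum>i\<in>{1..N}. node_pot M (x i)) + sum_list (map (\<lambda>e. snd e (map x (fst e))) G)"

definition partition_fn :: "model \<Rightarrow> real \<Rightarrow> nat \<Rightarrow> hedge list \<Rightarrow> real" where
  "partition_fn M lam N G =
     (\<Sum>x\<in>PiE {1..N} (\<lambda>_. {0..<mq M}). lam_pow lam (hamiltonian M N G x))"

fun indep_list :: "'a pmf list \<Rightarrow> 'a list pmf" where
  "indep_list [] = return_pmf []"
| "indep_list (p # ps) = bind_pmf p (\<lambda>x. map_pmf (\<lambda>xs. x # xs) (indep_list ps))"

definition unif_tuples :: "nat set \<Rightarrow> nat \<Rightarrow> nat list pmf" where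
  "unif_tuples V K = pmf_of_set {xs. length xs = K \<and> set xs \<subseteq> V}"

definition full_edge :: "model \<Rightarrow> nat \<Rightarrow> hedge pmf" where
  "full_edge M N = pair_pmf (unif_tuples {1..N} (mK M)) (edge_pot M)"

text \<open>Edge uniform on [N1]^K w.p. N1/N and uniform on [N2]^K = \{N1+1..N\}^K w.p. N2/N.\<close>
definition split_edge :: "model \<Rightarrow> nat \<Rightarrow> nat \<Rightarrow> hedge pmf" where
  "split_edge M N N1 =
     pair_pmf
       (bind_pmf (bernoulli_pmf (real N1 / real N))
          (\<lambda>b. if b then unif_tuples {1..N1} (mK M) else unif_tuples {N1+1..N} (mK M)))
       (edge_pot M)"

definition rand_graph :: "model \<Rightarrow> nat \<Rightarrow> nat \<Rightarrow> nat \<Rightarrow> nat \<Rightarrow> hedge list pmf" where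
  "rand_graph M N N1 m r =
     indep_list (replicate r (full_edge M N) @ replicate (m - r) (split_edge M N N1))"

end

theory Submission
  imports Defs
begin


lemma E_fin:
  fixes f :: "'a \<Rightarrow> real"
  assumes "finite A" "set_pmf p \<subseteq> A"
  shows "measure_pmf.expectation p f = (\<Sum>a\<in>A. pmf p a * f a)"
  by (subst integral_measure_pmf_real[of A]) (use assms in \<open>auto simp: mult.commute\<close>)

lemma E_swap:
  fixes f :: "'a \<Rightarrow> 'b \<Rightarrow> real"
  assumes "finite (set_pmf p)" "finite (set_pmf q)"
  shows "measure_pmf.expectation p (\<lambda>a. measure_pmf.expectation q (\<lambda>b. f a b))
       = measure_pmf.expectation q (\<lambda>b. measure_pmf.expectation p (\<lambda>a. f a b))"
  using assms by (simp add: E_fin[OF assms(1) order_refl] E_fin[OF assms(2) order_refl]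
      sum_distrib_left mult.assoc mult.left_commute sum.swap[of _ "set_pmf p"])

lemma E_mono:
  fixes f g :: "'a \<Rightarrow> real"
  assumes "finite (set_pmf p)" "\<And>a. a \<in> set_pmf p \<Longrightarrow> f a \<le> g a"
  shows "measure_pmf.expectation p f \<le> measure_pmf.expectation p g"
  using assms by (simp add: E_fin[OF assms(1) order_refl] sum_mono mult_left_mono)

lemma E_bind:
  fixes f :: "'b \<Rightarrow> real"
  assumes "finite (set_pmf q)" "\<And>z. z \<in> set_pmf q \<Longrightarrow> finite (set_pmf (K z))"
  shows "measure_pmf.expectation (bind_pmf q K) f
       = measure_pmf.expectation q (\<lambda>z. measure_pmf.expectation (K z) f)"
proof -
  let ?Y = "\<Union>z\<in>set_pmf q. set_pmf (K z)"
  have fY: "finite ?Y" using assms by auto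
  have "measure_pmf.expectation (bind_pmf q K) f = (\<Sum>y\<in>?Y. pmf (bind_pmf q K) y * f y)"
    by (rule E_fin[OF fY]) auto
  also have "\<dots> = (\<Sum>y\<in>?Y. (\<Sum>z\<in>set_pmf q. pmf q z * pmf (K z) y) * f y)"
    by (simp add: pmf_bind E_fin[OF assms(1) order_refl])
  also have "\<dots> = (\<Sum>z\<in>set_pmf q. pmf q z * (\<Sum>y\<in>?Y. pmf (K z) y * f y))"
    by (simp add: sum_distrib_left sum_distrib_right mult.assoc sum.swap[of _ ?Y])
  also have "\<dots> = (\<Sum>z\<in>set_pmf q. pmf q z * measure_pmf.expectation (K z) f)"
    by (intro sum.cong refl arg_cong2[where f="(*)"], subst E_fin[OF fY]) auto
  also have "\<dots> = measure_pmf.expectation q (\<lambda>z. measure_pmf.expectation (K z) f)"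
    by (simp add: E_fin[OF assms(1) order_refl])
  finally show ?thesis .
qed

lemma finite_indep_list:
  "(\<And>p. p \<in> set ps \<Longrightarrow> finite (set_pmf p)) \<Longrightarrow> finite (set_pmf (indep_list ps))"
  by (induction ps) auto

lemma set_indep_list:
  "G \<in> set_pmf (indep_list ps) \<Longrightarrow> set G \<subseteq> (\<Union>p\<in>set ps. set_pmf p)"
  by (induction ps arbitrary: G) fastforce+

lemma E_indep_Cons:
  fixes f :: "'a list \<Rightarrow> real"
  assumes "\<And>p. p \<in> set (q # ps) \<Longrightarrow> finite (set_pmf p)"
  shows "measure_pmf.expectation (indep_list (q # ps)) f
       = measure_pmf.expectation q (\<lambda>z. measure_pmf.expectation (indep_list ps) (\<lambda>G. f (z # G)))"
  using assms by (simp add: E_bind finite_indep_list)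

lemma E_indep_insert:
  fixes \<Psi> :: "'a list \<Rightarrow> real"
  assumes fin: "\<And>p'. p' \<in> set (as @ p # bs) \<Longrightarrow> finite (set_pmf p')"
    and inv: "\<And>x e y. \<Psi> (x @ e # y) = \<Psi> (e # x @ y)"
  shows "measure_pmf.expectation (indep_list (as @ p # bs)) \<Psi>
       = measure_pmf.expectation (indep_list (as @ bs)) (\<lambda>G. measure_pmf.expectation p (\<lambda>e. \<Psi> (e # G)))"
  using fin inv
proof (induction as arbitrary: \<Psi>)
  case Nil
  have "measure_pmf.expectation (indep_list (p # bs)) \<Psi>
      = measure_pmf.expectation p (\<lambda>z. measure_pmf.expectation (indep_list bs) (\<lambda>G. \<Psi> (z # G)))"
    by (rule E_indep_Cons) (use Nil.prems in auto)
  also have "\<dots> = measure_pmf.expectation (indep_list bs) (\<lambda>G. measure_pmf.expectation p (\<lambda>z. \<Psi> (z # G)))"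
    by (rule E_swap) (use Nil.prems in \<open>auto simp: finite_indep_list\<close>)
  finally show ?case by simp
next
  case (Cons qq as)
  have sw: "\<And>z e G. \<Psi> (z # e # G) = \<Psi> (e # z # G)"
    using Cons.prems(2)[of "[_]"] by simp
  have "measure_pmf.expectation (indep_list ((qq # as) @ p # bs)) \<Psi>
      = measure_pmf.expectation qq (\<lambda>z. measure_pmf.expectation (indep_list (as @ p # bs)) (\<lambda>G. \<Psi> (z # G)))"
    unfolding append_Cons by (rule E_indep_Cons) (use Cons.prems(1) in auto)
  also have "\<dots> = measure_pmf.expectation qq (\<lambda>z. measure_pmf.expectation (indep_list (as @ bs))
                     (\<lambda>G. measure_pmf.expectation p (\<lambda>e. \<Psi> (z # e # G))))"
  proof (intro arg_cong[where f="measure_pmf.expectation qq"] ext)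
    fix z
    have "\<And>x e y. \<Psi> (z # x @ e # y) = \<Psi> (z # e # x @ y)"
    proof -
      fix x e y
      have "\<Psi> (z # x @ e # y) = \<Psi> ((z # x) @ e # y)" by simp
      also have "\<dots> = \<Psi> (e # z # x @ y)" by (subst Cons.prems(2)) simp
      also have "\<dots> = \<Psi> ([z] @ e # x @ y)" by (subst Cons.prems(2)) simp
      finally show "\<Psi> (z # x @ e # y) = \<Psi> (z # e # x @ y)" by simp
    qed
    then show "measure_pmf.expectation (indep_list (as @ p # bs)) (\<lambda>G. \<Psi> (z # G)) =
          measure_pmf.expectation (indep_list (as @ bs)) (\<lambda>G. measure_pmf.expectation p (\<lambda>e. \<Psi> (z # e # G)))"
      using Cons.IH[of "\<lambda>G. \<Psi> (z # G)"] Cons.prems(1) by simp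
  qed
  also have "\<dots> = measure_pmf.expectation (indep_list ((qq # as) @ bs))
                     (\<lambda>G. measure_pmf.expectation p (\<lambda>e. \<Psi> (e # G)))"
    unfolding append_Cons by (subst E_indep_Cons) (use Cons.prems(1) in \<open>auto simp: sw\<close>)
  finally show ?case .
qed



definition Lset :: "nat set \<Rightarrow> nat \<Rightarrow> nat list set" where
  "Lset V K = {xs. length xs = K \<and> set xs \<subseteq> V}"

lemma Lset_Suc: "Lset V (Suc K) = (\<lambda>(x, xs). x # xs) ` (V \<times> Lset V K)"
  unfolding Lset_def by (auto simp: length_Suc_conv image_iff)

lemma finite_Lset: "finite V \<Longrightarrow> finite (Lset V K)"
  unfolding Lset_def using finite_lists_length_eq[of V K] by (simp add: conj_commute)

lemma card_Lset: "finite V \<Longrightarrow> card (Lset V K) = card V ^ K"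
  unfolding Lset_def using card_lists_length_eq[of V K] by (simp add: conj_commute)

lemma sum_Lset_prod:
  fixes g :: "nat \<Rightarrow> real"
  assumes "finite V"
  shows "(\<Sum>i\<in>Lset V K. prod_list (map g i)) = (\<Sum>v\<in>V. g v) ^ K"
proof (induction K)
  case 0
  have "Lset V 0 = {[]}" unfolding Lset_def by auto
  then show ?case by simp
next
  case (Suc K)
  have inj: "inj_on (\<lambda>(x, xs). x # xs) (V \<times> Lset V K)" by (auto simp: inj_on_def)
  have "(\<Sum>i\<in>Lset V (Suc K). prod_list (map g i))
      = (\<Sum>(x, xs)\<in>V \<times> Lset V K. g x * prod_list (map g xs))"
    unfolding Lset_Suc by (subst sum.reindex[OF inj]) (auto intro!: sum.cong)
  also have "\<dots> = (\<Sum>x\<in>V. g x) * (\<Sum>xs\<in>Lset V K. prod_list (map g xs))"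
    by (simp add: sum.cartesian_product[symmetric] sum_product)
  finally show ?case using Suc by simp
qed

definition hK :: "(nat \<Rightarrow> nat \<Rightarrow> nat) \<Rightarrow> nat \<Rightarrow> nat \<Rightarrow> real" where
  "hK ys n v = of_bool (\<forall>j<n. ys j v = 0) + of_bool (\<forall>j<n. ys j v = 1)"

lemma prod_of_bool: "finite A \<Longrightarrow> (\<Prod>j\<in>A. (of_bool (P j) :: real)) = of_bool (\<forall>j\<in>A. P j)"
  by (induction A rule: finite_induct) auto

lemma bin_lists_Lset: "bin_lists K = Lset {0,1} K"
  unfolding bin_lists_def Lset_def by simp

lemma ksat_core:
  "(\<Sum>a\<in>bin_lists (length i). \<Prod>j<n. (of_bool (map (ys j) i = a) :: real))
     = prod_list (map (hK ys n) i)"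
proof (induction i)
  case Nil
  have "bin_lists 0 = {[]}" unfolding bin_lists_def by auto
  then show ?case by simp
next
  case (Cons v i)
  have inj: "inj_on (\<lambda>(x, xs). x # xs) ({0,1} \<times> Lset {0,1} (length i))" by (auto simp: inj_on_def)
  have "(\<Sum>a\<in>bin_lists (length (v # i)). \<Prod>j<n. (of_bool (map (ys j) (v # i) = a) :: real))
      = (\<Sum>(b, as)\<in>{0,1} \<times> Lset {0,1} (length i). \<Prod>j<n. (of_bool (ys j v = b \<and> map (ys j) i = as) :: real))"
    unfolding bin_lists_Lset length_Cons Lset_Suc by (subst sum.reindex[OF inj]) (auto intro!: sum.cong)
  also have "\<dots> = (\<Sum>(b, as)\<in>{0,1} \<times> Lset {0,1} (length i).
                  (\<Prod>j<n. (of_bool (ys j v = b) :: real)) * (\<Prod>j<n. (of_bool (map (ys j) i = as) :: real)))"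
    by (intro sum.cong refl) (auto simp: prod.distrib[symmetric] intro!: prod.cong)
  also have "\<dots> = (\<Sum>b\<in>{0,1}. (\<Prod>j<n. (of_bool (ys j v = b) :: real))) *
        (\<Sum>as\<in>Lset {0,1} (length i). \<Prod>j<n. (of_bool (map (ys j) i = as) :: real))"
    by (simp add: sum.cartesian_product[symmetric] sum_distrib_left[symmetric] distrib_right)
  also have "(\<Sum>b\<in>{0,1}. (\<Prod>j<n. (of_bool (ys j v = b) :: real))) = hK ys n v"
    by (simp add: hK_def prod_of_bool) blast
  finally show ?case using Cons by (simp add: bin_lists_Lset)
qed

lemma pow_convex:
  fixes a b t :: real
  assumes "0 \<le> a" "0 \<le> b" "0 \<le> t" "t \<le> 1"
  shows "(t * a + (1 - t) * b) ^ K \<le> t * a ^ K + (1 - t) * b ^ K"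
proof -
  have cv: "convex_on {0..} (\<lambda>x::real. x ^ K)"
  proof (cases "even K")
    case True
    then show ?thesis using convex_power_even[of K] convex_on_subset by blast
  next
    case False
    then show ?thesis using convex_power_odd[of K] by simp
  qed
  from convex_onD[OF cv, of "1 - t" a b] assms
  show ?thesis by (simp add: algebra_simps)
qed



lemma unif_Lset: "unif_tuples V K = pmf_of_set (Lset V K)"
  unfolding unif_tuples_def Lset_def ..

lemma Lset_ne: "V \<noteq> {} \<Longrightarrow> Lset V K \<noteq> {}"
  unfolding Lset_def by (auto intro!: exI[of _ "replicate K (SOME v. v \<in> V)"] some_in_eq[THEN iffD2])

lemma set_unif: "finite V \<Longrightarrow> V \<noteq> {} \<Longrightarrow> set_pmf (unif_tuples V K) = Lset V K"
  by (simp add: unif_Lset finite_Lset Lset_ne)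

lemma E_unif_repr:
  fixes Q :: "nat list \<Rightarrow> real"
  assumes "finite V" "V \<noteq> {}" "finite T"
    and rep: "\<And>i. i \<in> Lset V K \<Longrightarrow> Q i = (\<Sum>t\<in>T. c t * prod_list (map (g t) i))"
  shows "measure_pmf.expectation (unif_tuples V K) Q = (\<Sum>t\<in>T. c t * ((\<Sum>v\<in>V. g t v) / card V) ^ K)"
proof -
  have "measure_pmf.expectation (unif_tuples V K) Q = (\<Sum>i\<in>Lset V K. Q i) / card (Lset V K)"
    by (simp add: unif_Lset integral_pmf_of_set finite_Lset assms Lset_ne)
  also have "(\<Sum>i\<in>Lset V K. Q i) = (\<Sum>i\<in>Lset V K. \<Sum>t\<in>T. c t * prod_list (map (g t) i))"
    by (rule sum.cong) (auto simp: rep)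
  also have "\<dots> = (\<Sum>t\<in>T. c t * (\<Sum>v\<in>V. g t v) ^ K)"
    by (subst sum.swap) (simp add: sum_distrib_left[symmetric] sum_Lset_prod assms)
  finally show ?thesis
    by (simp add: card_Lset assms power_divide sum_divide_distrib[symmetric] sum_distrib_left
          del: sum_divide_distrib)
qed

lemma compare_unif:
  fixes Q :: "nat list \<Rightarrow> real"
  assumes N: "1 \<le> N1" "1 \<le> N2" "N1 + N2 = N" and "finite T"
    and c: "\<And>t. 0 \<le> c t" and g: "\<And>t v. 0 \<le> g t v"
    and rep: "\<And>i. i \<in> Lset {1..N} K \<Longrightarrow> Q i = (\<Sum>t\<in>T. c t * prod_list (map (g t) i))"
  shows "measure_pmf.expectation (unif_tuples {1..N} K) Q
     \<le> (real N1 / real N) * measure_pmf.expectation (unif_tuples {1..N1} K) Q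
       + (1 - real N1 / real N) * measure_pmf.expectation (unif_tuples {N1+1..N} K) Q"
proof -
  have sub1: "Lset {1..N1} K \<subseteq> Lset {1..N} K" and sub2: "Lset {N1+1..N} K \<subseteq> Lset {1..N} K"
    using N unfolding Lset_def by auto
  have e: "measure_pmf.expectation (unif_tuples {1..N} K) Q = (\<Sum>t\<in>T. c t * ((\<Sum>v\<in>{1..N}. g t v) / card {1..N}) ^ K)"
    by (rule E_unif_repr) (use N assms(4) rep in auto)
  have e1: "measure_pmf.expectation (unif_tuples {1..N1} K) Q = (\<Sum>t\<in>T. c t * ((\<Sum>v\<in>{1..N1}. g t v) / card {1..N1}) ^ K)"
    by (rule E_unif_repr) (use N assms(4) rep sub1 in auto)
  have e2: "measure_pmf.expectation (unif_tuples {N1+1..N} K) Q = (\<Sum>t\<in>T. c t * ((\<Sum>v\<in>{N1+1..N}. g t v) / card {N1+1..N}) ^ K)"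
    by (rule E_unif_repr) (use N assms(4) rep sub2 in auto)
  define \<alpha> where "\<alpha> = real N1 / real N"
  have a01: "0 \<le> \<alpha>" "\<alpha> \<le> 1" using N by (auto simp: \<alpha>_def)
  have split: "(\<Sum>v\<in>{1..N}. g t v) / card {1..N}
      = \<alpha> * ((\<Sum>v\<in>{1..N1}. g t v) / card {1..N1}) + (1 - \<alpha>) * ((\<Sum>v\<in>{N1+1..N}. g t v) / card {N1+1..N})" for t
  proof -
    have "(\<Sum>v\<in>{1..N}. g t v) = (\<Sum>v\<in>{1..N1}. g t v) + (\<Sum>v\<in>{N1+1..N}. g t v)"
      using N sum.ub_add_nat[of 1 N1 "g t" N2] by simp
    moreover have "card {N1+1..N} = N2" using N by simp
    moreover have "1 - \<alpha> = real N2 / real N" using N by (auto simp: \<alpha>_def field_simps)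
    moreover have h: "real N1 + real N2 = real N" using N by simp
    ultimately show ?thesis using N
      apply (simp add: \<alpha>_def field_simps)
      by (metis h distrib_left distrib_right)
  qed
  have "(\<Sum>t\<in>T. c t * ((\<Sum>v\<in>{1..N}. g t v) / card {1..N}) ^ K)
     \<le> (\<Sum>t\<in>T. c t * (\<alpha> * ((\<Sum>v\<in>{1..N1}. g t v) / card {1..N1}) ^ K
              + (1 - \<alpha>) * ((\<Sum>v\<in>{N1+1..N}. g t v) / card {N1+1..N}) ^ K))"
    unfolding split
    by (intro sum_mono mult_left_mono pow_convex c a01 divide_nonneg_nonneg sum_nonneg g) auto
  also have "\<dots> = \<alpha> * (\<Sum>t\<in>T. c t * ((\<Sum>v\<in>{1..N1}. g t v) / card {1..N1}) ^ K)
      + (1 - \<alpha>) * (\<Sum>t\<in>T. c t * ((\<Sum>v\<in>{N1+1..N}. g t v) / card {N1+1..N}) ^ K)"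
    by (simp add: sum_distrib_left sum.distrib distrib_left mult.left_commute)
  finally show ?thesis using e e1 e2 by (simp add: \<alpha>_def)
qed

lemma E_pair:
  fixes f :: "'a \<times> 'b \<Rightarrow> real"
  assumes "finite (set_pmf A)" "finite (set_pmf B)"
  shows "measure_pmf.expectation (pair_pmf A B) f
       = measure_pmf.expectation A (\<lambda>a. measure_pmf.expectation B (\<lambda>b. f (a, b)))"
  unfolding pair_pmf_def using assms by (simp add: E_bind)



fun lo :: "model \<Rightarrow> ereal" where
  "lo IndSet = -\<infinity>"
| "lo (Ising \<beta> B) = ereal (-\<beta>)"
| "lo _ = 0"

fun hi :: "model \<Rightarrow> ereal" where
  "hi IndSet = 0"
| "hi (Ising \<beta> B) = ereal \<beta>"
| "hi _ = 1"

lemma finite_bin_lists: "finite (bin_lists K)"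
  unfolding bin_lists_Lset by (rule finite_Lset) simp

lemma bin_lists_ne: "bin_lists K \<noteq> {}"
  unfolding bin_lists_Lset by (rule Lset_ne) simp

lemma card_bin_lists: "card (bin_lists K) = 2 ^ K"
  unfolding bin_lists_Lset by (simp add: card_Lset numeral_2_eq_2)

lemma finite_pot: "finite (set_pmf (edge_pot M))"
  by (cases M) (auto simp: finite_bin_lists bin_lists_ne)

lemma pot_vals: "\<phi> \<in> set_pmf (edge_pot M) \<Longrightarrow> \<phi> y = lo M \<or> \<phi> y = hi M"
  by (cases M) (auto simp: finite_bin_lists bin_lists_ne split: if_splits)

lemma cmp_edge:
  fixes f :: "hedge \<Rightarrow> real" and Q :: "nat list \<Rightarrow> real" and c :: "'t \<Rightarrow> real"
  assumes N: "1 \<le> N1" "1 \<le> N2" "N1 + N2 = N" and "finite T"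
    and c: "\<And>t. 0 \<le> c t" and g: "\<And>t v. 0 \<le> g t v"
    and rep: "\<And>i. i \<in> Lset {1..N} (mK M) \<Longrightarrow>
        measure_pmf.expectation (edge_pot M) (\<lambda>\<phi>. f (i, \<phi>)) = (\<Sum>t\<in>T. c t * prod_list (map (g t) i))"
  shows "measure_pmf.expectation (full_edge M N) f \<le> measure_pmf.expectation (split_edge M N N1) f"
proof -
  define Q where "Q i = measure_pmf.expectation (edge_pot M) (\<lambda>\<phi>. f (i, \<phi>))" for i
  have fU: "finite (set_pmf (unif_tuples V K))" if "finite V" "V \<noteq> {}" for V K
    using that by (simp add: set_unif finite_Lset)
  have a01: "0 \<le> real N1 / real N" "real N1 / real N \<le> 1" using N by auto
  have "measure_pmf.expectation (full_edge M N) f = measure_pmf.expectation (unif_tuples {1..N} (mK M)) Q"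
    unfolding full_edge_def Q_def using N by (subst E_pair) (auto intro!: fU finite_pot)
  also have "\<dots> \<le> (real N1 / real N) * measure_pmf.expectation (unif_tuples {1..N1} (mK M)) Q
       + (1 - real N1 / real N) * measure_pmf.expectation (unif_tuples {N1+1..N} (mK M)) Q"
    by (rule compare_unif[OF N assms(4) c g]) (use rep in \<open>auto simp: Q_def\<close>)
  also have "\<dots> = measure_pmf.expectation (split_edge M N N1) f"
  proof -
    have fb: "finite (set_pmf (bernoulli_pmf (real N1 / real N)))" by (rule finite_subset[of _ UNIV]) auto
    have "measure_pmf.expectation (split_edge M N N1) f =
       measure_pmf.expectation (bernoulli_pmf (real N1 / real N) \<bind>
          (\<lambda>b. if b then unif_tuples {1..N1} (mK M) else unif_tuples {N1+1..N} (mK M))) Q"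
      unfolding split_edge_def Q_def using N fb
      by (subst E_pair) (auto intro!: finite_pot fU)
    also have "\<dots> = measure_pmf.expectation (bernoulli_pmf (real N1 / real N))
        (\<lambda>b. measure_pmf.expectation (if b then unif_tuples {1..N1} (mK M) else unif_tuples {N1+1..N} (mK M)) Q)"
      using N by (subst E_bind) (auto intro!: fb fU)
    finally show ?thesis using a01 by (simp add: mult.commute)
  qed
  finally show ?thesis .
qed



definition Dn :: "model \<Rightarrow> (nat \<Rightarrow> nat \<Rightarrow> nat) \<Rightarrow> nat \<Rightarrow> hedge \<Rightarrow> real" where
  "Dn M xs n e = (\<Prod>j<n. of_bool (snd e (map (xs j) (fst e)) = lo M))"

lemma if01_eq0[simp]: "((if c then 0 else 1::ereal) = 0) = c" by simp

lemma Lset2: "i \<in> Lset V 2 \<Longrightarrow> \<exists>a b. i = [a, b] \<and> a \<in> V \<and> b \<in> V"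
  unfolding Lset_def by (auto simp: numeral_2_eq_2 length_Suc_conv)

lemma rep_indset:
  "i \<in> Lset {1..N} 2 \<Longrightarrow> measure_pmf.expectation (edge_pot IndSet) (\<lambda>\<phi>. Dn IndSet xs n (i, \<phi>))
     = (\<Sum>t\<in>{()}. 1 * prod_list (map (\<lambda>v. \<Prod>j<n. of_bool (xs j v = 1)) i))"
  by (drule Lset2) (auto simp: Dn_def prod.distrib[symmetric] intro!: prod.cong)

lemma rep_eq:
  assumes "i \<in> Lset {1..N} 2"
    and pot: "\<And>y. (phz y = lo M) = (y ! 0 = y ! 1)"
    and M: "edge_pot M = return_pmf phz"
  shows "measure_pmf.expectation (edge_pot M) (\<lambda>\<phi>. Dn M xs n (i, \<phi>))
     = (\<Sum>s\<in>(\<lambda>v. \<lambda>j. if j < n then xs j v else 0) ` {1..N}.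
          1 * prod_list (map (\<lambda>v. of_bool ((\<lambda>j. if j < n then xs j v else 0) = s)) i))"
proof -
  define col where "col v = (\<lambda>j. if j < n then xs j v else (0::nat))" for v
  obtain a b where i: "i = [a, b]" "a \<in> {1..N}" "b \<in> {1..N}" using Lset2[OF assms(1)] by blast
  have "Dn M xs n (i, phz) = of_bool (col a = col b)"
  proof -
    have "(col a = col b) = (\<forall>j<n. xs j a = xs j b)"
      unfolding col_def fun_eq_iff by (metis (full_types))
    then show ?thesis by (simp add: Dn_def pot i prod_of_bool) blast
  qed
  also have "\<dots> = (\<Sum>s\<in>col ` {1..N}. of_bool (col a = s) * of_bool (col b = s))"
  proof -
    have "(\<Sum>s\<in>col ` {1..N}. (of_bool (col a = s) * of_bool (col b = s) :: real))
        = (\<Sum>s\<in>col ` {1..N}. if s = col a then of_bool (col b = col a) else 0)"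
      by (intro sum.cong) auto
    also have "\<dots> = (if col a \<in> col ` {1..N} then of_bool (col b = col a) else 0)"
      by (rule sum.delta) simp
    also have "\<dots> = of_bool (col a = col b)" using i by auto
    finally show ?thesis by simp
  qed
  finally show ?thesis by (simp add: M i col_def)
qed

lemma rep_ksat:
  assumes "i \<in> Lset {1..N} K"
  shows "measure_pmf.expectation (edge_pot (KSAT K)) (\<lambda>\<phi>. Dn (KSAT K) xs n (i, \<phi>))
     = (\<Sum>t\<in>{()}. (1 / 2 ^ K) * prod_list (map (hK xs n) i))"
proof -
  have li: "length i = K" using assms by (simp add: Lset_def)
  have "measure_pmf.expectation (edge_pot (KSAT K)) (\<lambda>\<phi>. Dn (KSAT K) xs n (i, \<phi>))
      = (\<Sum>a\<in>bin_lists K. \<Prod>j<n. (of_bool (map (xs j) i = a) :: real)) / 2 ^ K"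
    by (simp add: integral_pmf_of_set finite_bin_lists bin_lists_ne card_bin_lists Dn_def)
  also have "\<dots> = prod_list (map (hK xs n) i) / 2 ^ K"
    using ksat_core[where i=i and n=n and ys=xs] li by simp
  finally show ?thesis by simp
qed

definition flipS :: "nat set \<Rightarrow> (nat \<Rightarrow> nat \<Rightarrow> nat) \<Rightarrow> nat \<Rightarrow> nat \<Rightarrow> nat" where
  "flipS S xs j v = (if j \<in> S then xs j v else 1 - xs j v)"

lemma flip_eq:
  assumes "a \<in> bin_lists K" "\<forall>v\<in>set i. x v \<le> 1"
  shows "(map x i = map (\<lambda>b. 1 - b) a) = (map (\<lambda>v. 1 - x v) i = a)"
proof
  assume h: "map x i = map (\<lambda>b. 1 - b) a"
  have "map (\<lambda>v. 1 - x v) i = map (\<lambda>b. 1 - b) (map x i)" by simp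
  also have "\<dots> = map (\<lambda>b. 1 - (1 - b)) a" by (simp add: h)
  also have "\<dots> = a" using assms(1) unfolding bin_lists_def by (auto intro!: map_idI)
  finally show "map (\<lambda>v. 1 - x v) i = a" .
next
  assume h: "map (\<lambda>v. 1 - x v) i = a"
  have "map x i = map (\<lambda>v. 1 - (1 - x v)) i" using assms(2) by (auto intro!: map_cong)
  also have "\<dots> = map (\<lambda>b. 1 - b) a" by (simp add: h[symmetric])
  finally show "map x i = map (\<lambda>b. 1 - b) a" .
qed

lemma rep_nae:
  assumes "i \<in> Lset {1..N} K" "K \<ge> 1"
    and xs: "\<And>j v. j < n \<Longrightarrow> v \<in> set i \<Longrightarrow> xs j v \<le> 1"
  shows "measure_pmf.expectation (edge_pot (NAEKSAT K)) (\<lambda>\<phi>. Dn (NAEKSAT K) xs n (i, \<phi>))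
     = (\<Sum>S\<in>Pow {..<n}. (1 / 2 ^ K) * prod_list (map (hK (flipS S xs) n) i))"
proof -
  have li: "length i = K" using assms by (simp add: Lset_def)
  have step: "(\<Prod>j<n. (of_bool (map (xs j) i = a \<or> map (xs j) i = map (\<lambda>b. 1 - b) a) :: real))
       = (\<Sum>S\<in>Pow {..<n}. \<Prod>j<n. of_bool (map (flipS S xs j) i = a))" if a: "a \<in> bin_lists K" for a
  proof -
    have ne: "a \<noteq> map (\<lambda>b. 1 - b) a"
    proof
      assume eq: "a = map (\<lambda>b. 1 - b) a"
      have l: "0 < length a" using a assms(2) by (simp add: bin_lists_def)
      have "a ! 0 = (map (\<lambda>b. 1 - b) a) ! 0" using arg_cong[OF eq, of "\<lambda>l. l ! 0"] .
      also have "\<dots> = 1 - a ! 0" by (rule nth_map[OF l])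
      finally have "a ! 0 = 1 - a ! 0" .
      then show False by presburger
    qed
    have "(\<Prod>j<n. (of_bool (map (xs j) i = a \<or> map (xs j) i = map (\<lambda>b. 1 - b) a) :: real))
        = (\<Prod>j<n. of_bool (map (xs j) i = a) + of_bool (map (xs j) i = map (\<lambda>b. 1 - b) a))"
      using ne by (intro prod.cong) auto
    also have "\<dots> = (\<Sum>S\<in>Pow {..<n}. (\<Prod>j\<in>S. of_bool (map (xs j) i = a)) *
                         (\<Prod>j\<in>{..<n} - S. of_bool (map (xs j) i = map (\<lambda>b. 1 - b) a)))"
      by (rule prod_add) simp
    also have "\<dots> = (\<Sum>S\<in>Pow {..<n}. \<Prod>j<n. of_bool (map (flipS S xs j) i = a))"
    proof (intro sum.cong refl)
      fix S assume S: "S \<in> Pow {..<n}"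
      have "(\<Prod>j<n. (of_bool (map (flipS S xs j) i = a) :: real))
          = (\<Prod>j\<in>{..<n} - S. of_bool (map (flipS S xs j) i = a)) * (\<Prod>j\<in>S. of_bool (map (flipS S xs j) i = a))"
        using S by (subst prod.subset_diff[of S "{..<n}"]) auto
      also have "(\<Prod>j\<in>S. (of_bool (map (flipS S xs j) i = a) :: real)) = (\<Prod>j\<in>S. of_bool (map (xs j) i = a))"
        by (intro prod.cong) (auto simp: flipS_def)
      also have "(\<Prod>j\<in>{..<n} - S. (of_bool (map (flipS S xs j) i = a) :: real))
          = (\<Prod>j\<in>{..<n} - S. of_bool (map (xs j) i = map (\<lambda>b. 1 - b) a))"
      proof (intro prod.cong refl)
        fix j assume j: "j \<in> {..<n} - S"
        have A: "map (flipS S xs j) i = map (\<lambda>v. 1 - xs j v) i" using j by (simp add: flipS_def)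
        have B: "(map (xs j) i = map (\<lambda>b. 1 - b) a) = (map (\<lambda>v. 1 - xs j v) i = a)"
          by (rule flip_eq[OF a]) (use j xs in auto)
        show "(of_bool (map (flipS S xs j) i = a) :: real) = of_bool (map (xs j) i = map (\<lambda>b. 1 - b) a)"
          unfolding A B by (rule refl)
      qed
      finally show "(\<Prod>j\<in>S. (of_bool (map (xs j) i = a) :: real)) *
          (\<Prod>j\<in>{..<n} - S. of_bool (map (xs j) i = map (\<lambda>b. 1 - b) a))
          = (\<Prod>j<n. of_bool (map (flipS S xs j) i = a))" by simp
    qed
    finally show ?thesis .
  qed
  have "measure_pmf.expectation (edge_pot (NAEKSAT K)) (\<lambda>\<phi>. Dn (NAEKSAT K) xs n (i, \<phi>))
      = (\<Sum>a\<in>bin_lists K. \<Prod>j<n. (of_bool (map (xs j) i = a \<or> map (xs j) i = map (\<lambda>b. 1 - b) a) :: real)) / 2 ^ K"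
    by (simp add: integral_pmf_of_set finite_bin_lists bin_lists_ne card_bin_lists Dn_def)
  also have "\<dots> = (\<Sum>a\<in>bin_lists K. \<Sum>S\<in>Pow {..<n}. \<Prod>j<n. (of_bool (map (flipS S xs j) i = a) :: real)) / 2 ^ K"
    by (rule arg_cong[where f="\<lambda>x. x / 2 ^ K"], rule sum.cong[OF refl], rule step)
  also have "\<dots> = (\<Sum>S\<in>Pow {..<n}. prod_list (map (hK (flipS S xs) n) i)) / 2 ^ K"
    by (subst sum.swap) (simp add: ksat_core[where i=i, unfolded li])
  finally show ?thesis by (simp add: sum_divide_distrib)
qed



lemma hK_nonneg: "0 \<le> hK ys n v" by (simp add: hK_def)

lemma D_cmp:
  assumes N: "1 \<le> N1" "1 \<le> N2" "N1 + N2 = N" and vm: "valid_model M"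
    and xs: "\<And>j. j < n \<Longrightarrow> xs j \<in> PiE {1..N} (\<lambda>_. {0..<mq M})"
  shows "measure_pmf.expectation (full_edge M N) (Dn M xs n)
       \<le> measure_pmf.expectation (split_edge M N N1) (Dn M xs n)"
proof (cases M)
  case IndSet
  show ?thesis unfolding IndSet
    by (rule cmp_edge[OF N, of "{()}" "\<lambda>_. 1" "\<lambda>_ v. \<Prod>j<n. of_bool (xs j v = 1)"])
       (auto intro: prod_nonneg simp del: edge_pot.simps simp: rep_indset[where N=N])
next
  case MaxCut
  have r: "\<And>i. i \<in> Lset {1..N} (mK (MaxCut)) \<Longrightarrow>
     measure_pmf.expectation (edge_pot (MaxCut)) (\<lambda>\<phi>. Dn (MaxCut) xs n (i, \<phi>))
     = (\<Sum>s\<in>(\<lambda>v. \<lambda>j. if j < n then xs j v else 0) ` {1..N}.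
          1 * prod_list (map (\<lambda>v. of_bool ((\<lambda>j. if j < n then xs j v else 0) = s)) i))"
    by (rule rep_eq[where phz="\<lambda>y. if y ! 0 \<noteq> y ! 1 then 1 else 0"]) (auto)
  show ?thesis unfolding MaxCut
    by (rule cmp_edge[OF N _ _ _ r]) auto
next
  case (Coloring q)
  have r: "\<And>i. i \<in> Lset {1..N} (mK (Coloring q)) \<Longrightarrow>
     measure_pmf.expectation (edge_pot (Coloring q)) (\<lambda>\<phi>. Dn (Coloring q) xs n (i, \<phi>))
     = (\<Sum>s\<in>(\<lambda>v. \<lambda>j. if j < n then xs j v else 0) ` {1..N}.
          1 * prod_list (map (\<lambda>v. of_bool ((\<lambda>j. if j < n then xs j v else 0) = s)) i))"
    by (rule rep_eq[where phz="\<lambda>y. if y ! 0 \<noteq> y ! 1 then 1 else 0"]) (auto)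
  show ?thesis unfolding Coloring
    by (rule cmp_edge[OF N _ _ _ r]) auto
next
  case (Ising \<beta> B)
  with vm have b: "\<beta> > 0" by simp
  have r: "\<And>i. i \<in> Lset {1..N} (mK (Ising \<beta> B)) \<Longrightarrow>
     measure_pmf.expectation (edge_pot (Ising \<beta> B)) (\<lambda>\<phi>. Dn (Ising \<beta> B) xs n (i, \<phi>))
     = (\<Sum>s\<in>(\<lambda>v. \<lambda>j. if j < n then xs j v else 0) ` {1..N}.
          1 * prod_list (map (\<lambda>v. of_bool ((\<lambda>j. if j < n then xs j v else 0) = s)) i))"
    by (rule rep_eq[where phz="\<lambda>y. if y ! 0 = y ! 1 then ereal (-\<beta>) else ereal \<beta>"]) (use b in auto)
  show ?thesis unfolding Ising
    by (rule cmp_edge[OF N _ _ _ r]) auto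
next
  case (KSAT K)
  have r: "\<And>i. i \<in> Lset {1..N} (mK (KSAT K)) \<Longrightarrow>
     measure_pmf.expectation (edge_pot (KSAT K)) (\<lambda>\<phi>. Dn (KSAT K) xs n (i, \<phi>))
     = (\<Sum>t\<in>{()}. (1 / 2 ^ K) * prod_list (map (hK xs n) i))"
    unfolding mK.simps by (rule rep_ksat)
  show ?thesis unfolding KSAT
    by (rule cmp_edge[OF N _ _ _ r]) (auto intro: hK_nonneg)
next
  case (NAEKSAT K)
  with vm have K: "K \<ge> 1" by simp
  have vals: "xs j v \<le> 1" if "j < n" "v \<in> set i" "i \<in> Lset {1..N} K" for i j v
  proof -
    have "v \<in> {1..N}" using that by (auto simp: Lset_def)
    then show ?thesis using xs[OF that(1)] NAEKSAT by (auto simp: PiE_def Pi_def)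
  qed
  have r: "\<And>i. i \<in> Lset {1..N} (mK (NAEKSAT K)) \<Longrightarrow>
     measure_pmf.expectation (edge_pot (NAEKSAT K)) (\<lambda>\<phi>. Dn (NAEKSAT K) xs n (i, \<phi>))
     = (\<Sum>S\<in>Pow {..<n}. (1 / 2 ^ K) * prod_list (map (hK (flipS S xs) n) i))"
    unfolding mK.simps by (rule rep_nae[OF _ K]) (use vals in blast)+
  show ?thesis unfolding NAEKSAT
    by (rule cmp_edge[OF N _ _ _ r]) (auto intro: hK_nonneg)
qed



lemma series_cmp:
  fixes u pF pS :: "'a \<Rightarrow> real"
  assumes "finite A" and u: "\<And>a. a \<in> A \<Longrightarrow> 0 \<le> u a \<and> u a < 1"
    and mom: "\<And>n. (\<Sum>a\<in>A. pF a * u a ^ n) \<le> (\<Sum>a\<in>A. pS a * u a ^ n)"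
  shows "(\<Sum>a\<in>A. pS a * ln (1 - u a)) \<le> (\<Sum>a\<in>A. pF a * ln (1 - u a))"
proof -
  have s: "(\<lambda>n. - ((u a) ^ n) / of_nat n) sums ln (1 - u a)" if "a \<in> A" for a
    using ln_series'[of "- u a"] u[OF that] by simp
  have sF: "(\<lambda>n. \<Sum>a\<in>A. pF a * (- ((u a) ^ n) / of_nat n)) sums (\<Sum>a\<in>A. pF a * ln (1 - u a))"
    by (intro sums_sum sums_mult s)
  have sS: "(\<lambda>n. \<Sum>a\<in>A. pS a * (- ((u a) ^ n) / of_nat n)) sums (\<Sum>a\<in>A. pS a * ln (1 - u a))"
    by (intro sums_sum sums_mult s)
  show ?thesis
  proof (rule sums_le[OF _ sS sF])
    fix n
    have "(\<Sum>a\<in>A. pS a * (- ((u a) ^ n) / of_nat n)) = - (1 / of_nat n) * (\<Sum>a\<in>A. pS a * u a ^ n)"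
      by (simp add: sum_distrib_left)
    also have "\<dots> \<le> - (1 / of_nat n) * (\<Sum>a\<in>A. pF a * u a ^ n)"
      using mom[of n] by (intro mult_left_mono_neg) auto
    also have "\<dots> = (\<Sum>a\<in>A. pF a * (- ((u a) ^ n) / of_nat n))"
      by (simp add: sum_distrib_left)
    finally show "(\<Sum>a\<in>A. pS a * (- ((u a) ^ n) / of_nat n)) \<le> (\<Sum>a\<in>A. pF a * (- ((u a) ^ n) / of_nat n))" .
  qed
qed

lemma E_series_cmp:
  fixes u :: "'a \<Rightarrow> real"
  assumes fF: "finite (set_pmf F)" and fS: "finite (set_pmf S)"
    and u: "\<And>a. a \<in> set_pmf F \<union> set_pmf S \<Longrightarrow> 0 \<le> u a \<and> u a < 1"
    and mom: "\<And>n. measure_pmf.expectation F (\<lambda>a. u a ^ n) \<le> measure_pmf.expectation S (\<lambda>a. u a ^ n)"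
  shows "measure_pmf.expectation S (\<lambda>a. ln (1 - u a)) \<le> measure_pmf.expectation F (\<lambda>a. ln (1 - u a))"
proof -
  let ?A = "set_pmf F \<union> set_pmf S"
  have fA: "finite ?A" using fF fS by simp
  show ?thesis
    unfolding E_fin[OF fA Un_upper1] E_fin[OF fA Un_upper2]
    by (rule series_cmp[OF fA u]) (use mom in \<open>simp_all add: E_fin[OF fA Un_upper1] E_fin[OF fA Un_upper2]\<close>)
qed

lemma lam_pow_add:
  assumes "lam > 0" "a \<noteq> \<infinity>" "b \<noteq> \<infinity>"
  shows "lam_pow lam (a + b) = lam_pow lam a * lam_pow lam b"
  using assms by (cases a; cases b) (auto simp: lam_pow_def powr_add)

lemma lam_pow_nonneg: "0 \<le> lam_pow lam a"
  by (simp add: lam_pow_def)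

lemma ham_Cons: "hamiltonian M N (e # G) x = snd e (map x (fst e)) + hamiltonian M N G x"
  by (simp add: hamiltonian_def add_ac)

lemma ham_perm: "hamiltonian M N (xs @ e # ys) x = hamiltonian M N (e # xs @ ys) x"
  by (simp add: hamiltonian_def add_ac)

lemma Z_perm: "partition_fn M lam N (xs @ e # ys) = partition_fn M lam N (e # xs @ ys)"
  by (simp add: partition_fn_def ham_perm)

lemma node_fin: "node_pot M s \<noteq> \<infinity>"
  by (cases M) auto

lemma lo_fin: "lo M \<noteq> \<infinity>" and hi_fin: "hi M \<noteq> \<infinity>"
  by (cases M; simp)+

lemma pot_fin: "\<phi> \<in> set_pmf (edge_pot M) \<Longrightarrow> \<phi> y \<noteq> \<infinity>"
  using pot_vals[of \<phi> M y] lo_fin hi_fin by auto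

lemma ham_fin:
  assumes "\<And>e. e \<in> set G \<Longrightarrow> snd e \<in> set_pmf (edge_pot M)"
  shows "hamiltonian M N G x \<noteq> \<infinity>"
proof -
  have "(\<Sum>i\<in>{1..N}. node_pot M (x i)) \<noteq> \<infinity>" by (simp add: sum_Pinfty node_fin)
  moreover have "sum_list (map (\<lambda>e. snd e (map x (fst e))) G) \<noteq> \<infinity>"
    using assms by (induction G) (fastforce dest: pot_fin)+
  ultimately show ?thesis by (simp add: hamiltonian_def)
qed

lemma lo_hi:
  assumes "valid_model M" "lam > 1"
  shows "lam_pow lam (lo M) < lam_pow lam (hi M)" "lo M \<noteq> hi M"
  using assms by (cases M; auto simp: lam_pow_def)+



definition good :: "model \<Rightarrow> nat \<Rightarrow> hedge \<Rightarrow> bool" where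
  "good M N e \<longleftrightarrow> fst e \<in> Lset {1..N} (mK M) \<and> snd e \<in> set_pmf (edge_pot M)"

lemma E_cong:
  fixes f g :: "'a \<Rightarrow> real"
  assumes "finite (set_pmf p)" "\<And>a. a \<in> set_pmf p \<Longrightarrow> f a = g a"
  shows "measure_pmf.expectation p f = measure_pmf.expectation p g"
  using assms by (simp add: E_fin[OF assms(1) order_refl])

lemma E_sum_lin:
  fixes f :: "'b \<Rightarrow> 'a \<Rightarrow> real"
  assumes "finite (set_pmf p)" "finite I"
  shows "measure_pmf.expectation p (\<lambda>e. \<Sum>k\<in>I. c k * f k e) = (\<Sum>k\<in>I. c k * measure_pmf.expectation p (f k))"
  using assms by (simp add: E_fin[OF assms(1) order_refl] sum_distrib_left mult.left_commute sum.swap[of _ "set_pmf p"])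

lemma E_const_add:
  fixes f :: "'a \<Rightarrow> real"
  assumes "finite (set_pmf p)"
  shows "measure_pmf.expectation p (\<lambda>e. C + f e) = C + measure_pmf.expectation p f"
  using assms by (simp add: integrable_measure_pmf_finite)

lemma supp_full:
  assumes "1 \<le> N"
  shows "set_pmf (full_edge M N) \<subseteq> Lset {1..N} (mK M) \<times> set_pmf (edge_pot M)"
  using assms by (auto simp: full_edge_def set_unif)

lemma supp_split:
  assumes "1 \<le> N1" "1 \<le> N2" "N1 + N2 = N"
  shows "set_pmf (split_edge M N N1) \<subseteq> Lset {1..N} (mK M) \<times> set_pmf (edge_pot M)"
proof -
  have "Lset {1..N1} (mK M) \<subseteq> Lset {1..N} (mK M)" "Lset {N1+1..N} (mK M) \<subseteq> Lset {1..N} (mK M)"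
    using assms by (auto simp: Lset_def)
  then show ?thesis using assms by (auto simp: split_edge_def set_unif split: if_splits)
qed

lemma fin_E0: "finite (Lset {1..N} (mK M) \<times> set_pmf (edge_pot M))"
  by (simp add: finite_Lset finite_pot)

definition Bf :: "model \<Rightarrow> hedge \<Rightarrow> (nat \<Rightarrow> nat) \<Rightarrow> real" where
  "Bf M e x = of_bool (snd e (map x (fst e)) = lo M)"

lemma moment_cmp:
  fixes p :: "(nat \<Rightarrow> nat) \<Rightarrow> real"
  assumes N: "1 \<le> N1" "1 \<le> N2" "N1 + N2 = N" and vm: "valid_model M"
    and p: "\<And>x. 0 \<le> p x"
  defines "X \<equiv> PiE {1..N} (\<lambda>_. {0..<mq M})"
  shows "measure_pmf.expectation (full_edge M N) (\<lambda>e. (\<Sum>x\<in>X. p x * Bf M e x) ^ n)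
      \<le> measure_pmf.expectation (split_edge M N N1) (\<lambda>e. (\<Sum>x\<in>X. p x * Bf M e x) ^ n)"
proof -
  have fX: "finite X" unfolding X_def by (simp add: finite_PiE)
  have fF: "finite (set_pmf (full_edge M N))" using N by (intro finite_subset[OF supp_full fin_E0]) auto
  have fS: "finite (set_pmf (split_edge M N N1))" by (rule finite_subset[OF supp_split[OF N] fin_E0])
  have pw: "(\<Sum>x\<in>X. p x * Bf M e x) ^ n = (\<Sum>xs\<in>PiE {..<n} (\<lambda>_. X). (\<Prod>j<n. p (xs j)) * Dn M xs n e)" for e
  proof -
    have "(\<Sum>x\<in>X. p x * Bf M e x) ^ n = (\<Prod>j<n. \<Sum>x\<in>X. p x * Bf M e x)" by simp
    also have "\<dots> = (\<Sum>xs\<in>PiE {..<n} (\<lambda>_. X). \<Prod>j<n. p (xs j) * Bf M e (xs j))"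
      by (rule prod_sum_PiE) (auto simp: fX)
    also have "\<dots> = (\<Sum>xs\<in>PiE {..<n} (\<lambda>_. X). (\<Prod>j<n. p (xs j)) * Dn M xs n e)"
      by (simp add: prod.distrib Dn_def Bf_def)
    finally show ?thesis .
  qed
  have fP: "finite (PiE {..<n} (\<lambda>_. X))" using fX by (simp add: finite_PiE)
  show ?thesis
    unfolding pw E_sum_lin[OF fF fP] E_sum_lin[OF fS fP]
  proof (intro sum_mono mult_left_mono prod_nonneg p)
    fix xs assume "xs \<in> PiE {..<n} (\<lambda>_. X)"
    then have "\<And>j. j < n \<Longrightarrow> xs j \<in> PiE {1..N} (\<lambda>_. {0..<mq M})" by (auto simp: X_def)
    then show "measure_pmf.expectation (full_edge M N) (Dn M xs n)
       \<le> measure_pmf.expectation (split_edge M N N1) (Dn M xs n)"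
      by (rule D_cmp[OF N vm])
  qed
qed



lemma lo_inf_IndSet: "lo M = -\<infinity> \<Longrightarrow> M = IndSet"
  by (cases M) auto

lemma lam_pow_pos: "lam > 0 \<Longrightarrow> h \<noteq> -\<infinity> \<Longrightarrow> 0 < lam_pow lam h"
  by (simp add: lam_pow_def)

lemma indset_zero:
  assumes G: "\<And>e. e \<in> set G \<Longrightarrow> good IndSet N e" and lam: "lam > 0"
  defines "z \<equiv> (\<lambda>v. if v \<in> {1..N} then 0 else undefined) :: nat \<Rightarrow> nat"
  shows "lam_pow lam (hamiltonian IndSet N G z) = 1"
proof -
  have "sum_list (map (\<lambda>e. snd e (map z (fst e))) G) = 0"
    using G
  proof (induction G)
    case (Cons e G)
    have "snd e = (\<lambda>y. if y = [1,1] then -\<infinity> else 0)" using Cons.prems[of e] by (simp add: good_def)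
    moreover have "map z (fst e) \<noteq> [1,1]"
    proof -
      have "set (fst e) \<subseteq> {1..N}" "length (fst e) = 2" using Cons.prems[of e] by (auto simp: good_def Lset_def)
      then obtain a b where "fst e = [a,b]" "a \<in> {1..N}" by (auto simp: numeral_2_eq_2 length_Suc_conv)
      then show ?thesis by (simp add: z_def)
    qed
    ultimately show ?case using Cons by simp
  qed simp
  moreover have "(\<Sum>i\<in>{1..N}. node_pot IndSet (z i)) = 0" by (simp add: z_def)
  ultimately show ?thesis using lam by (simp add: hamiltonian_def lam_pow_def)
qed

lemma per_graph:
  assumes N: "1 \<le> N1" "1 \<le> N2" "N1 + N2 = N" and vm: "valid_model M" and lam: "lam > 1"
    and G: "\<And>e. e \<in> set G \<Longrightarrow> good M N e"
  shows "measure_pmf.expectation (split_edge M N N1) (\<lambda>e. ln (partition_fn M lam N (e # G)))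
       \<le> measure_pmf.expectation (full_edge M N) (\<lambda>e. ln (partition_fn M lam N (e # G)))"
proof -
  define X where "X = PiE {1..N} (\<lambda>_. {0..<mq M})"
  define w where "w x = lam_pow lam (hamiltonian M N G x)" for x
  define W where "W = (\<Sum>x\<in>X. w x)"
  define \<kappa> where "\<kappa> = lam_pow lam (hi M)"
  define lw where "lw = lam_pow lam (lo M)"
  have fX: "finite X" unfolding X_def by (simp add: finite_PiE)
  have w0: "0 \<le> w x" for x by (simp add: w_def lam_pow_nonneg)
  have W0: "0 \<le> W" unfolding W_def by (intro sum_nonneg w0)
  have lk: "lw < \<kappa>" "0 \<le> lw" using lo_hi[OF vm lam] by (auto simp: \<kappa>_def lw_def lam_pow_nonneg)
  have fF: "finite (set_pmf (full_edge M N))" using N by (intro finite_subset[OF supp_full fin_E0]) auto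
  have fS: "finite (set_pmf (split_edge M N N1))" by (rule finite_subset[OF supp_split[OF N] fin_E0])
  have goodF: "good M N e" if "e \<in> set_pmf (full_edge M N)" for e
    using supp_full[of N M] N that by (auto simp: good_def)
  have goodS: "good M N e" if "e \<in> set_pmf (split_edge M N N1)" for e
    using supp_split[OF N, of M] that by (auto simp: good_def)
  have Gpot: "\<And>e. e \<in> set G \<Longrightarrow> snd e \<in> set_pmf (edge_pot M)" using G by (simp add: good_def)
  have Zdec: "partition_fn M lam N (e # G) = \<kappa> * W - (\<kappa> - lw) * (\<Sum>x\<in>X. w x * Bf M e x)"
    if e: "good M N e" for e
  proof -
    have pe: "snd e \<in> set_pmf (edge_pot M)" using e by (simp add: good_def)
    have lp: "lam_pow lam (snd e y) = \<kappa> - (\<kappa> - lw) * of_bool (snd e y = lo M)" for y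
      using pot_vals[OF pe, of y] lo_hi(2)[OF vm lam] by (auto simp: \<kappa>_def lw_def)
    have "partition_fn M lam N (e # G) = (\<Sum>x\<in>X. lam_pow lam (snd e (map x (fst e))) * w x)"
      unfolding partition_fn_def X_def[symmetric] ham_Cons w_def
      using lam by (intro sum.cong refl lam_pow_add pot_fin[OF pe] ham_fin Gpot) auto
    also have "\<dots> = (\<Sum>x\<in>X. \<kappa> * w x - (\<kappa> - lw) * (w x * Bf M e x))"
      by (intro sum.cong refl) (simp add: lp Bf_def algebra_simps)
    also have "\<dots> = \<kappa> * W - (\<kappa> - lw) * (\<Sum>x\<in>X. w x * Bf M e x)"
      by (simp add: W_def sum_subtractf sum_distrib_left)
    finally show ?thesis .
  qed
  have B01: "0 \<le> Bf M e x" "Bf M e x \<le> 1" for e x by (auto simp: Bf_def)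
  show ?thesis
  proof (cases "W = 0")
    case True
    have wz: "\<forall>x\<in>X. w x = 0" using True fX w0 unfolding W_def by (simp add: sum_nonneg_eq_0_iff)
    have Z0: "ln (partition_fn M lam N (e # G)) = 0" if "good M N e" for e
      using Zdec[OF that] True wz by simp
    have "measure_pmf.expectation (split_edge M N N1) (\<lambda>e. ln (partition_fn M lam N (e # G))) = 0"
      using E_cong[OF fS, of _ "\<lambda>_. 0"] Z0 goodS by simp
    moreover have "measure_pmf.expectation (full_edge M N) (\<lambda>e. ln (partition_fn M lam N (e # G))) = 0"
      using E_cong[OF fF, of _ "\<lambda>_. 0"] Z0 goodF by simp
    ultimately show ?thesis by simp
  next
    case False
    then have Wp: "W > 0" using W0 by simp
    have kp: "\<kappa> > 0" using lk by simp
    define \<mu> where "\<mu> e = (\<Sum>x\<in>X. (w x / W) * Bf M e x)" for e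
    define u where "u e = ((\<kappa> - lw) / \<kappa>) * \<mu> e" for e
    have mu01: "0 \<le> \<mu> e" "\<mu> e \<le> 1" for e
    proof -
      show "0 \<le> \<mu> e" unfolding \<mu>_def using Wp w0 B01 by (intro sum_nonneg) auto
      have "\<mu> e \<le> (\<Sum>x\<in>X. w x / W)" unfolding \<mu>_def
        using Wp w0 B01 by (intro sum_mono mult_left_le) auto
      also have "\<dots> = 1" using Wp by (simp add: W_def sum_divide_distrib[symmetric])
      finally show "\<mu> e \<le> 1" .
    qed
    have sumwB: "(\<Sum>x\<in>X. w x * Bf M e x) = W * \<mu> e" for e
      unfolding \<mu>_def using Wp by (simp add: sum_distrib_left)
    have u_lt: "0 \<le> u e \<and> u e < 1" if ge: "good M N e" for e
    proof
      show "0 \<le> u e" unfolding u_def using lk mu01 by simp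
      show "u e < 1"
      proof (cases "lw > 0")
        case True
        have "u e \<le> (\<kappa> - lw) / \<kappa>" unfolding u_def using lk mu01[of e] by (intro mult_left_le) auto
        also have "\<dots> < 1" using True kp by (simp add: field_simps)
        finally show ?thesis .
      next
        case False
        then have l0: "lw = 0" using lk by simp
        then have "lo M = -\<infinity>" using lam unfolding lw_def lam_pow_def by (auto split: if_splits)
        then have MI: "M = IndSet" by (rule lo_inf_IndSet)
        define z :: "nat \<Rightarrow> nat" where "z = (\<lambda>v. if v \<in> {1..N} then 0 else undefined)"
        have zX: "z \<in> X" unfolding X_def z_def MI by auto
        have wz1: "w z = 1" unfolding w_def z_def MI using lam G by (intro indset_zero) (auto simp: MI)
        have Bz: "Bf M e z = 0"
        proof -
          obtain a b where "fst e = [a,b]" "a \<in> {1..N}" using ge MI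
            by (auto simp: good_def Lset_def numeral_2_eq_2 length_Suc_conv)
          moreover have "snd e = (\<lambda>y. if y = [1,1] then -\<infinity> else 0)" using ge MI by (simp add: good_def)
          ultimately show ?thesis using MI by (simp add: Bf_def z_def)
        qed
        have "(\<Sum>x\<in>X. w x * Bf M e x) = (\<Sum>x\<in>X - {z}. w x * Bf M e x)"
          using fX zX Bz by (subst sum.remove[OF fX zX]) auto
        also have "\<dots> \<le> (\<Sum>x\<in>X - {z}. w x)"
          using w0 B01 by (intro sum_mono mult_right_le_one_le) auto
        also have "\<dots> = W - w z" using fX zX by (simp add: W_def sum_diff1)
        finally have "W * \<mu> e < W" using wz1 sumwB by simp
        then have "\<mu> e < 1" using Wp by simp
        then show ?thesis unfolding u_def using l0 kp by simp
      qed
    qed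
    have lnZ: "ln (partition_fn M lam N (e # G)) = ln (\<kappa> * W) + ln (1 - u e)" if "good M N e" for e
    proof -
      have e1: "(\<kappa> * W) * ((\<kappa> - lw) / \<kappa> * \<mu> e) = (\<kappa> - lw) * (W * \<mu> e)"
        using kp by (simp add: field_simps)
      have "partition_fn M lam N (e # G) = (\<kappa> * W) * (1 - u e)"
        unfolding Zdec[OF that] sumwB u_def right_diff_distrib e1 by simp
      then show ?thesis using u_lt[OF that] kp Wp by (simp add: ln_mult)
    qed
    have "measure_pmf.expectation (split_edge M N N1) (\<lambda>e. ln (partition_fn M lam N (e # G)))
        = ln (\<kappa> * W) + measure_pmf.expectation (split_edge M N N1) (\<lambda>e. ln (1 - u e))"
      by (subst E_cong[OF fS, of _ "\<lambda>e. ln (\<kappa> * W) + ln (1 - u e)"]) (auto simp: lnZ goodS E_const_add fS)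
    also have "\<dots> \<le> ln (\<kappa> * W) + measure_pmf.expectation (full_edge M N) (\<lambda>e. ln (1 - u e))"
    proof -
      have "measure_pmf.expectation (split_edge M N N1) (\<lambda>e. ln (1 - u e))
          \<le> measure_pmf.expectation (full_edge M N) (\<lambda>e. ln (1 - u e))"
      proof (rule E_series_cmp[OF fF fS])
        show "\<And>a. a \<in> set_pmf (full_edge M N) \<union> set_pmf (split_edge M N N1) \<Longrightarrow> 0 \<le> u a \<and> u a < 1"
          using u_lt goodF goodS by blast
        fix n
        have "measure_pmf.expectation (full_edge M N) (\<lambda>a. \<mu> a ^ n) \<le> measure_pmf.expectation (split_edge M N N1) (\<lambda>a. \<mu> a ^ n)"
          unfolding \<mu>_def X_def using w0 Wp by (intro moment_cmp[OF N vm]) auto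
        then show "measure_pmf.expectation (full_edge M N) (\<lambda>a. u a ^ n) \<le> measure_pmf.expectation (split_edge M N N1) (\<lambda>a. u a ^ n)"
          unfolding u_def power_mult_distrib using lk kp by (simp add: mult_left_mono)
      qed
      then show ?thesis by simp
    qed
    also have "\<dots> = measure_pmf.expectation (full_edge M N) (\<lambda>e. ln (partition_fn M lam N (e # G)))"
      by (subst E_cong[OF fF, of _ "\<lambda>e. ln (\<kappa> * W) + ln (1 - u e)"]) (auto simp: lnZ goodF E_const_add fF)
    finally show ?thesis .
  qed
qed



theorem proposition3:
  fixes c lam :: real and M :: model and N N1 N2 r :: nat
  assumes "c > 0" and "lam > 1" and "valid_model M"
    and "1 \<le> N1" and "N1 \<le> N - 1" and "1 \<le> N2" and "N2 \<le> N - 1" and "N1 + N2 = N"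
    and "1 \<le> r" and "r \<le> nat \<lfloor>c * real N\<rfloor>"
  shows "measure_pmf.expectation (rand_graph M N N1 (nat \<lfloor>c * real N\<rfloor>) r)
           (\<lambda>G. ln (partition_fn M lam N G))
       \<ge> measure_pmf.expectation (rand_graph M N N1 (nat \<lfloor>c * real N\<rfloor>) (r - 1))
           (\<lambda>G. ln (partition_fn M lam N G))"
proof -
  define m where "m = nat \<lfloor>c * real N\<rfloor>"
  define F where "F = full_edge M N"
  define S where "S = split_edge M N N1"
  define as where "as = replicate (r - 1) F"
  define bs where "bs = replicate (m - r) S"
  define \<Psi> where "\<Psi> G = ln (partition_fn M lam N G)" for G
  have N: "1 \<le> N1" "1 \<le> N2" "N1 + N2 = N" using assms by auto
  have fF: "finite (set_pmf F)" unfolding F_def using N by (intro finite_subset[OF supp_full fin_E0]) auto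
  have fS: "finite (set_pmf S)" unfolding S_def by (rule finite_subset[OF supp_split[OF N] fin_E0])
  have goodF: "good M N e" if "e \<in> set_pmf F" for e
    using supp_full[of N M] N that by (auto simp: good_def F_def)
  have goodS: "good M N e" if "e \<in> set_pmf S" for e
    using supp_split[OF N, of M] that by (auto simp: good_def S_def)
  have L1: "replicate r F @ replicate (m - r) S = as @ F # bs"
  proof -
    have "replicate r F = replicate (r - 1) F @ [F]"
      using assms(9) by (cases r) (simp_all add: replicate_append_same)
    then show ?thesis unfolding as_def bs_def by simp
  qed
  have L2: "replicate (r - 1) F @ replicate (m - (r - 1)) S = as @ S # bs"
  proof -
    have "m - (r - 1) = Suc (m - r)" using assms(9,10) unfolding m_def by linarith
    then show ?thesis unfolding as_def bs_def by simp
  qed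
  have inv: "\<And>x e y. \<Psi> (x @ e # y) = \<Psi> (e # x @ y)" by (simp add: \<Psi>_def Z_perm)
  have fin: "finite (set_pmf p')" if "p' \<in> set (as @ q # bs)" "q = F \<or> q = S" for p' q
    using that fF fS by (auto simp: as_def bs_def split: if_splits)
  have eF: "measure_pmf.expectation (rand_graph M N N1 m r) \<Psi>
      = measure_pmf.expectation (indep_list (as @ bs)) (\<lambda>G. measure_pmf.expectation F (\<lambda>e. \<Psi> (e # G)))"
    unfolding rand_graph_def F_def[symmetric] S_def[symmetric] L1
    by (rule E_indep_insert[OF _ inv]) (use fin in blast)
  have eS: "measure_pmf.expectation (rand_graph M N N1 m (r - 1)) \<Psi>
      = measure_pmf.expectation (indep_list (as @ bs)) (\<lambda>G. measure_pmf.expectation S (\<lambda>e. \<Psi> (e # G)))"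
    unfolding rand_graph_def F_def[symmetric] S_def[symmetric] L2
    by (rule E_indep_insert[OF _ inv]) (use fin in blast)
  have "measure_pmf.expectation (indep_list (as @ bs)) (\<lambda>G. measure_pmf.expectation S (\<lambda>e. \<Psi> (e # G)))
     \<le> measure_pmf.expectation (indep_list (as @ bs)) (\<lambda>G. measure_pmf.expectation F (\<lambda>e. \<Psi> (e # G)))"
  proof (rule E_mono)
    show "finite (set_pmf (indep_list (as @ bs)))"
      by (rule finite_indep_list) (use fF fS in \<open>auto simp: as_def bs_def\<close>)
    fix G assume "G \<in> set_pmf (indep_list (as @ bs))"
    then have "set G \<subseteq> (\<Union>p\<in>set (as @ bs). set_pmf p)" by (rule set_indep_list)
    then have G: "\<And>e. e \<in> set G \<Longrightarrow> good M N e"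
      using goodF goodS by (auto simp: as_def bs_def split: if_splits)
    show "measure_pmf.expectation S (\<lambda>e. \<Psi> (e # G)) \<le> measure_pmf.expectation F (\<lambda>e. \<Psi> (e # G))"
      unfolding S_def F_def \<Psi>_def by (rule per_graph[OF N assms(3,2) G])
  qed
  moreover have "\<Psi> = (\<lambda>G. ln (partition_fn M lam N G))" by (simp add: fun_eq_iff \<Psi>_def)
  ultimately show ?thesis using eF eS by (simp add: m_def)
qed


end
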